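(* Let $\mathcal N$ be a finite ground set, $f:2^{\mathcal N}\to\mathbb R$ monotone and submodular, $k\ge1$ an integer, and $O$ an optimal solution to $\max\{f(S):|S|\le k\}$. Consider the algorithm: initialize $A\leftarrow\emptyset$; for each $u\in\mathcal N$ in turn, if $\Delta(u\mid A)\ge f(A)/k$ then $A\leftarrow A\cup\{u\}$. At termination of this algorithm, $f(O)\le2f(A)$.
   Context: $f$ is submodular if $f(T\cup\{x\})-f(T)\le f(S\cup\{x\})-f(S)$ for all $S\subseteq T\subseteq\mathcal N$, $x\notin T$; monotone if $f(S)\le f(T)$ for $S\subseteq T$. $\Delta(x\mid S)=f(S\cup\{x\})-f(S)$. *)

theory Defs
  imports Complex_Main
begin

definition marginal :: "('a set \<Rightarrow> real) \<Rightarrow> 'a \<Rightarrow> 'a set \<Rightarrow> real" where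
  "marginal f x S = f (S \<union> {x}) - f S"

definition monotone_set_fun :: "'a set \<Rightarrow> ('a set \<Rightarrow> real) \<Rightarrow> bool" where
  "monotone_set_fun N f \<longleftrightarrow> (\<forall>S T. S \<subseteq> T \<and> T \<subseteq> N \<longrightarrow> f S \<le> f T)"

definition submodular_set_fun :: "'a set \<Rightarrow> ('a set \<Rightarrow> real) \<Rightarrow> bool" where
  "submodular_set_fun N f \<longleftrightarrow>
     (\<forall>S T x. S \<subseteq> T \<and> T \<subseteq> N \<and> x \<in> N \<and> x \<notin> T \<longrightarrow>
        marginal f x T \<le> marginal f x S)"

definition thr_step :: "('a set \<Rightarrow> real) \<Rightarrow> nat \<Rightarrow> 'a \<Rightarrow> 'a set \<Rightarrow> 'a set" where
  "thr_step f k u A = (if marginal f u A \<ge> f A / real k then A \<union> {u} else A)"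

definition thr_alg :: "('a set \<Rightarrow> real) \<Rightarrow> nat \<Rightarrow> 'a list \<Rightarrow> 'a set" where
  "thr_alg f k us = fold (thr_step f k) us {}"

end

theory Submission
  imports Defs
begin

lemma fold_mono_set:
  "A0 \<subseteq> fold (thr_step f k) us A0 \<and> fold (thr_step f k) us A0 \<subseteq> A0 \<union> set us"
proof (induction us arbitrary: A0)
  case Nil then show ?case by simp
next
  case (Cons x xs)
  have "A0 \<subseteq> thr_step f k x A0" "thr_step f k x A0 \<subseteq> A0 \<union> {x}"
    by (auto simp: thr_step_def)
  with Cons[of "thr_step f k x A0"] show ?case by auto
qed

lemma rejected:
  assumes mono: "monotone_set_fun N f" and sub: "submodular_set_fun N f" and k: "k \<ge> 1"
  shows "A0 \<subseteq> N \<Longrightarrow> set us \<subseteq> N \<Longrightarrow> u \<in> set us \<Longrightarrow> u \<notin> fold (thr_step f k) us A0 \<Longrightarrow>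
    marginal f u (fold (thr_step f k) us A0) < f (fold (thr_step f k) us A0) / real k"
proof (induction us arbitrary: A0)
  case Nil then show ?case by simp
next
  case (Cons x xs)
  define A1 where "A1 = thr_step f k x A0"
  define F where "F = fold (thr_step f k) xs A1"
  have F: "fold (thr_step f k) (x#xs) A0 = F" by (simp add: F_def A1_def)
  have A1N: "A1 \<subseteq> N" using Cons.prems by (auto simp: A1_def thr_step_def)
  have A1F: "A1 \<subseteq> F" "F \<subseteq> A1 \<union> set xs" using fold_mono_set[of A1 f k xs] by (auto simp: F_def)
  have FN: "F \<subseteq> N" using A1F A1N Cons.prems by auto
  show ?case
  proof (cases "u \<in> set xs")
    case True
    with Cons.IH[OF A1N] Cons.prems show ?thesis by (auto simp: F F_def A1_def)
  next
    case False
    then have ux: "u = x" using Cons.prems by auto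
    have xF: "x \<notin> F" using Cons.prems ux F by auto
    then have "x \<notin> A1" using A1F by auto
    then have rej: "marginal f x A0 < f A0 / real k"
      by (auto simp: A1_def thr_step_def split: if_splits)
    have A0F: "A0 \<subseteq> F" using A1F by (auto simp: A1_def thr_step_def split: if_splits)
    have "marginal f x F \<le> marginal f x A0"
      using sub A0F FN xF Cons.prems unfolding submodular_set_fun_def by auto
    moreover have "f A0 \<le> f F" using mono A0F FN unfolding monotone_set_fun_def by auto
    then have "f A0 / real k \<le> f F / real k" using k by (simp add: divide_right_mono)
    ultimately show ?thesis using rej ux F by auto
  qed
qed

lemma sum_bound:
  assumes sub: "submodular_set_fun N f" and "A \<subseteq> N"
  shows "finite D \<Longrightarrow> D \<subseteq> N \<Longrightarrow> D \<inter> A = {} \<Longrightarrow> f (A \<union> D) - f A \<le> (\<Sum>u\<in>D. marginal f u A)"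
proof (induction D rule: finite_induct)
  case empty then show ?case by simp
next
  case (insert x D)
  have "marginal f x (A \<union> D) \<le> marginal f x A"
    using sub assms(2) insert.prems insert.hyps unfolding submodular_set_fun_def by auto
  moreover have "marginal f x (A \<union> D) = f (A \<union> insert x D) - f (A \<union> D)"
    by (simp add: marginal_def Un_insert_right)
  ultimately show ?case using insert by auto
qed

theorem lemma9:
  fixes N :: "'a set" and f :: "'a set \<Rightarrow> real" and k :: nat
    and Opt :: "'a set" and us :: "'a list"
  assumes "finite N"
    and "distinct us" and "set us = N"
    and "\<forall>S\<subseteq>N. f S \<ge> 0"
    and "monotone_set_fun N f"
    and "submodular_set_fun N f"
    and "k \<ge> 1"
    and "Opt \<subseteq> N" and "card Opt \<le> k"
    and "\<forall>S\<subseteq>N. card S \<le> k \<longrightarrow> f S \<le> f Opt"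
  shows "f Opt \<le> 2 * f (thr_alg f k us)"
proof -
  define A where "A = thr_alg f k us"
  have AN: "A \<subseteq> N" using fold_mono_set[of "{}" f k us] assms(3) by (auto simp: A_def thr_alg_def)
  have fA: "f A \<ge> 0" using assms(4) AN by auto
  have rej: "\<And>u. u \<in> Opt - A \<Longrightarrow> marginal f u A < f A / real k"
    using rejected[OF assms(5,6,7), of "{}" us] assms(3,8) by (auto simp: A_def thr_alg_def)
  have "f Opt \<le> f (A \<union> (Opt - A))"
    using assms(5,8) AN unfolding monotone_set_fun_def by auto
  also have "\<dots> \<le> f A + (\<Sum>u\<in>Opt - A. marginal f u A)"
    using sum_bound[OF assms(6) AN, of "Opt - A"] assms(1,8) finite_subset by fastforce
  also have "(\<Sum>u\<in>Opt - A. marginal f u A) \<le> real (card (Opt - A)) * (f A / real k)"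
    using sum_bounded_above[of "Opt - A" "\<lambda>u. marginal f u A" "f A / real k"] rej
    by (meson less_imp_le)
  also have "real (card (Opt - A)) * (f A / real k) \<le> f A"
  proof -
    have "card (Opt - A) \<le> k"
      using assms(9) assms(1,8) finite_subset card_mono[of Opt "Opt - A"] by fastforce
    then have "real (card (Opt - A)) / real k \<le> 1" using assms(7) by simp
    then have "real (card (Opt - A)) / real k * f A \<le> 1 * f A" using fA by (rule mult_right_mono)
    then show ?thesis by simp
  qed
  finally show ?thesis unfolding A_def by simp
qed

end
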